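(* Let $p>1$ and $q>1$. Let $X$ be an $\mathbb{R}$-smooth Banach space, $Y$ a Banach space, $\mathcal{D}(A)\subset\mathcal{D}(B)\subset X$ subspaces, and $A:\mathcal{D}(A)\to X$, $B:\mathcal{D}(B)\to Y$ (possibly nonlinear) operators. Let $y\in\mathcal{D}(A)$ satisfy $A(y)=0$ and $B(y)=0$. Let $y_\theta\in\mathcal{D}(A)$ and set $\mathcal{R}_{eq}=A(y_\theta)$, $\mathcal{R}_{bn}=B(y_\theta)$, $\mathcal{E}=\|y_\theta-y\|^q$. Assume $A$ is $(p,\psi)$-coercive with function $\Lambda$, and $\psi$ is subordinate to $B$ (on $\mathcal{D}(A)$) with functions $\gamma$ and $\rho$. Then $$\mathcal{E}\le p^{\frac qp}\left(\gamma(y_\theta,y)\rho(\mathcal{R}_{bn})+\frac1p\Lambda^p(y_\theta,y)\|\mathcal{R}_{eq}\|^p\right)^{\frac qp}.$$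
   Context: $X$ is $\mathbb{R}$-smooth if for all $y$ with $\|y\|=1$ and all $\chi\in X$ the limit $D(\|\cdot\|)(y;\chi)=\lim_{\mathbb{R}\ni s\to0}\frac{\|y+s\chi\|-\|y\|}{s}$ exists (hence it exists for every $y\ne0$). Real $p$-form: $\langle y_1,y_2\rangle_p:=\|y_2\|^{p-1}D(\|\cdot\|)(y_2;y_1)$ for $y_2\neq0$, $\langle y_1,0\rangle_p:=0$ (equivalently $\|y_2\|^{p-2}\mathrm{Re}[y_1,y_2]$ with the semi-inner product $[\chi,y]=\|y\|(D(\|\cdot\|)(y;\chi)-iD(\|\cdot\|)(y;i\chi))$). $A$ is $(p,\psi)$-coercive, for $\psi:\mathcal{D}(A)\times\mathcal{D}(A)\to\mathbb{R}$, if $\|\chi-y\|^p\le\psi(\chi,y)+\Lambda(\chi,y)\langle A(\chi)-A(y),\chi-y\rangle_p$ for all $\chi,y\in\mathcal{D}(A)$, with some $\Lambda(\chi,y)\ge0$. $\psi$ is subordinate to $B$ if there is $\rho\in C(Y;\mathbb{R}^+)$ with $\rho(\xi)\to0$ as $\xi\to0$ and $|\psi(\chi,y)|\le\gamma(\chi,y)\rho(B(\chi)-B(y))$ for all $\chi,y\in\mathcal{D}(A)$, with some $\gamma(\chi,y)\ge0$. *)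

theory Defs
  imports "HOL-Analysis.Analysis"
begin

definition norm_dir_deriv :: "'a::real_normed_vector \<Rightarrow> 'a \<Rightarrow> real" where
  "norm_dir_deriv y x = Lim (at (0::real)) (\<lambda>s. (norm (y + s *\<^sub>R x) - norm y) / s)"

definition R_smooth :: "'a::real_normed_vector itself \<Rightarrow> bool" where
  "R_smooth _ \<longleftrightarrow> (\<forall>(y::'a) x. norm y = 1 \<longrightarrow>
      (\<exists>L. ((\<lambda>s::real. (norm (y + s *\<^sub>R x) - norm y) / s) \<longlongrightarrow> L) (at 0)))"

definition p_form :: "real \<Rightarrow> 'a::real_normed_vector \<Rightarrow> 'a \<Rightarrow> real" where
  "p_form p y1 y2 = (if y2 = 0 then 0 else norm y2 powr (p - 1) * norm_dir_deriv y2 y1)"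

definition p_psi_coercive ::
  "real \<Rightarrow> 'a set \<Rightarrow> ('a::real_normed_vector \<Rightarrow> 'a) \<Rightarrow> ('a \<Rightarrow> 'a \<Rightarrow> real)
     \<Rightarrow> ('a \<Rightarrow> 'a \<Rightarrow> real) \<Rightarrow> bool" where
  "p_psi_coercive p DA A \<psi> \<Lambda> \<longleftrightarrow>
     (\<forall>x\<in>DA. \<forall>y\<in>DA. \<Lambda> x y \<ge> 0 \<and>
        norm (x - y) powr p \<le> \<psi> x y + \<Lambda> x y * p_form p (A x - A y) (x - y))"

definition subordinate ::
  "'a set \<Rightarrow> ('a \<Rightarrow> 'b::real_normed_vector) \<Rightarrow> ('a \<Rightarrow> 'a \<Rightarrow> real)
     \<Rightarrow> ('a \<Rightarrow> 'a \<Rightarrow> real) \<Rightarrow> ('b \<Rightarrow> real) \<Rightarrow> bool" where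
  "subordinate DA B \<psi> \<gamma> \<rho> \<longleftrightarrow>
     continuous_on UNIV \<rho> \<and> (\<forall>\<xi>. \<rho> \<xi> \<ge> 0) \<and> (\<rho> \<longlongrightarrow> 0) (at 0) \<and>
     (\<forall>x\<in>DA. \<forall>y\<in>DA. \<gamma> x y \<ge> 0 \<and> \<bar>\<psi> x y\<bar> \<le> \<gamma> x y * \<rho> (B x - B y))"

end

theory Submission
  imports Defs
begin

lemma dd_bound:
  fixes e x :: "'a::real_normed_vector"
  assumes sm: "R_smooth TYPE('a)" and e0: "e \<noteq> 0"
  shows "\<bar>norm_dir_deriv e x\<bar> \<le> norm x"
proof -
  define c where "c = norm e"
  have c0: "c > 0" using e0 by (simp add: c_def)
  define u where "u = e /\<^sub>R c"
  have u1: "norm u = 1" using c0 by (simp add: u_def c_def)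
  obtain L where L: "((\<lambda>t::real. (norm (u + t *\<^sub>R x) - norm u) / t) \<longlongrightarrow> L) (at 0)"
    using sm u1 unfolding R_smooth_def by blast
  have fl: "filterlim (\<lambda>s::real. s / c) (at 0) (at 0)"
  proof (rule filterlim_atI)
    show "((\<lambda>s::real. s / c) \<longlongrightarrow> 0) (at 0)"
      using c0 by (auto intro!: tendsto_eq_intros)
    show "\<forall>\<^sub>F s in at (0::real). s / c \<noteq> 0"
      using c0 by (auto simp: eventually_at_filter intro!: always_eventually)
  qed
  have L2: "((\<lambda>s::real. (norm (u + (s/c) *\<^sub>R x) - norm u) / (s/c)) \<longlongrightarrow> L) (at 0)"
    using filterlim_compose[OF L fl] by simp
  have eq: "(norm (u + (s/c) *\<^sub>R x) - norm u) / (s/c) = (norm (e + s *\<^sub>R x) - norm e) / s"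
    if "s \<noteq> 0" for s
  proof -
    have "e + s *\<^sub>R x = c *\<^sub>R (u + (s/c) *\<^sub>R x)"
      using c0 by (simp add: u_def algebra_simps)
    hence "norm (e + s *\<^sub>R x) = c * norm (u + (s/c) *\<^sub>R x)" using c0 by simp
    thus ?thesis using c0 that u1 by (simp add: c_def[symmetric] field_simps)
  qed
  have L3: "((\<lambda>s::real. (norm (e + s *\<^sub>R x) - norm e) / s) \<longlongrightarrow> L) (at 0)"
  proof (rule Lim_transform_eventually[OF L2])
    show "\<forall>\<^sub>F s in at (0::real). (norm (u + (s/c) *\<^sub>R x) - norm u) / (s/c) = (norm (e + s *\<^sub>R x) - norm e) / s"
      unfolding eventually_at_filter by (rule always_eventually) (use eq in blast)
  qed
  hence dl: "norm_dir_deriv e x = L"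
    unfolding norm_dir_deriv_def by (rule tendsto_Lim[rotated]) simp
  have bd: "\<bar>(norm (e + s *\<^sub>R x) - norm e) / s\<bar> \<le> norm x" if "s \<noteq> 0" for s
  proof -
    have "\<bar>norm (e + s *\<^sub>R x) - norm e\<bar> \<le> norm (s *\<^sub>R x)"
      by (metis add_diff_cancel_left' norm_triangle_ineq3)
    hence "\<bar>norm (e + s *\<^sub>R x) - norm e\<bar> \<le> \<bar>s\<bar> * norm x" by simp
    thus ?thesis using that by (simp add: abs_divide divide_le_eq mult.commute)
  qed
  have "\<bar>L\<bar> \<le> norm x"
    using tendsto_rabs[OF L3]
  proof (rule tendsto_upperbound)
    show "\<forall>\<^sub>F s in at (0::real). \<bar>(norm (e + s *\<^sub>R x) - norm e) / s\<bar> \<le> norm x"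
      unfolding eventually_at_filter by (rule always_eventually) (use bd in blast)
  qed simp
  thus ?thesis using dl by simp
qed

theorem theorem5:
  fixes p q :: real
    and DA DB :: "'a::banach set"
    and A :: "'a \<Rightarrow> 'a" and B :: "'a \<Rightarrow> 'b::banach"
    and \<psi> \<Lambda> \<gamma> :: "'a \<Rightarrow> 'a \<Rightarrow> real" and \<rho> :: "'b \<Rightarrow> real"
    and y y\<theta> :: 'a
  assumes "p > 1" and "q > 1"
    and "R_smooth TYPE('a)"
    and "subspace DA" and "subspace DB" and "DA \<subseteq> DB"
    and "y \<in> DA" and "A y = 0" and "B y = 0"
    and "y\<theta> \<in> DA"
    and "p_psi_coercive p DA A \<psi> \<Lambda>"
    and "subordinate DA B \<psi> \<gamma> \<rho>"
  shows "norm (y\<theta> - y) powr q \<le>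
    p powr (q / p) * (\<gamma> y\<theta> y * \<rho> (B y\<theta>) + 1 / p * \<Lambda> y\<theta> y powr p * norm (A y\<theta>) powr p) powr (q / p)"
proof -
  define E where "E = norm (y\<theta> - y)"
  define R where "R = norm (A y\<theta>)"
  define L where "L = \<Lambda> y\<theta> y"
  define G where "G = \<gamma> y\<theta> y * \<rho> (B y\<theta>)"
  have p1: "p > 1" and q1: "q > 1" using assms by auto
  have E0: "E \<ge> 0" and R0: "R \<ge> 0" unfolding E_def R_def by auto
  have coer: "L \<ge> 0" "E powr p \<le> \<psi> y\<theta> y + L * p_form p (A y\<theta>) (y\<theta> - y)"
    using assms(7,8,10,11) unfolding p_psi_coercive_def E_def L_def by (metis diff_zero)+
  have sub: "\<gamma> y\<theta> y \<ge> 0" "\<bar>\<psi> y\<theta> y\<bar> \<le> G" "\<rho> (B y\<theta>) \<ge> 0"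
    using assms(7,9,10,12) unfolding subordinate_def G_def by (metis diff_zero)+
  have G0: "G \<ge> 0" using sub unfolding G_def by simp
  have pf: "p_form p (A y\<theta>) (y\<theta> - y) \<le> E powr (p - 1) * R"
  proof (cases "y\<theta> - y = 0")
    case True thus ?thesis using E0 R0 by (simp add: p_form_def)
  next
    case False
    have "norm_dir_deriv (y\<theta> - y) (A y\<theta>) \<le> R"
      using dd_bound[OF assms(3) False, of "A y\<theta>"] unfolding R_def by linarith
    thus ?thesis using False unfolding p_form_def E_def
      by (simp add: mult_left_mono)
  qed
  have step1: "E powr p \<le> G + (L * R) * E powr (p - 1)"
  proof -
    have "L * p_form p (A y\<theta>) (y\<theta> - y) \<le> L * (E powr (p - 1) * R)"
      using pf coer(1) by (rule mult_left_mono)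
    thus ?thesis using coer(2) sub(2) by (simp add: algebra_simps)
  qed
  define p' where "p' = p / (p - 1)"
  have p'1: "p' > 1" using p1 unfolding p'_def by (simp add: field_simps)
  have conj: "1/p + 1/p' = 1" using p1 unfolding p'_def by (simp add: field_simps)
  have LR0: "L * R \<ge> 0" using coer(1) R0 by simp
  have young: "(L * R) * E powr (p - 1) \<le> (L * R) powr p / p + (E powr (p - 1)) powr p' / p'"
    by (rule Youngs_inequality[OF p1 p'1 conj LR0]) simp
  have pp: "(E powr (p - 1)) powr p' = E powr p"
    using p1 unfolding p'_def by (simp add: powr_powr)
  have ip: "1 / p' = (p - 1) / p" unfolding p'_def by simp
  have "E powr p \<le> G + (L * R) powr p / p + ((p - 1) / p) * E powr p"
    using step1 young pp ip by (simp add: divide_inverse mult.commute)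
  moreover have "E powr p - ((p - 1) / p) * E powr p = E powr p / p"
    using p1 by (simp add: field_simps)
  ultimately have "E powr p / p \<le> G + (L * R) powr p / p"
    by linarith
  hence a1: "E powr p \<le> p * G + (L * R) powr p"
    using p1 by (simp add: field_simps)
  have a2: "(L * R) powr p = L powr p * R powr p" using coer(1) R0 by (simp add: powr_mult)
  have a3: "p * (G + 1 / p * L powr p * R powr p) = p * G + L powr p * R powr p"
    using p1 by (simp add: field_simps)
  have stepP: "E powr p \<le> p * (G + 1 / p * L powr p * R powr p)"
    using a1 a2 a3 by simp
  define S where "S = G + 1 / p * L powr p * R powr p"
  have S0: "S \<ge> 0" unfolding S_def using G0 p1 by simp
  have "E powr q = (E powr p) powr (q / p)" using p1 by (simp add: powr_powr)
  also have "\<dots> \<le> (p * S) powr (q / p)"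
    using stepP p1 q1 unfolding S_def by (intro powr_mono2) auto
  also have "\<dots> = p powr (q / p) * S powr (q / p)"
    by (rule powr_mult)
  finally show ?thesis unfolding S_def E_def G_def L_def R_def .
qed
end
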